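(* Let $N$ be an even positive integer and $\hbar=1/(2\pi N)$. For $n,m\in\{0,\dots,N-1\}$ the matrix elements of $F$ on $\mathcal{H}_\hbar(0)$ are \[ (\Phi_n^{(0,0)},F\Phi_m^{(0,0)})_P=\sum_{a=0}^{N-1}(\mathcal{F}^N)^{-1}_{na}\,M^{(n)}_{am}, \] where $(\mathcal{F}^N)^{-1}_{na}=e^{2\pi i na/N}/\sqrt N$, $\mathcal{F}^{N/2}_{jk}=e^{-2\pi i jk/(N/2)}/\sqrt{N/2}$, and $M^{(n)}$ is the $N\times N$ block-diagonal matrix with $M^{(n)}_{am}=0$ unless $a,m$ both lie in $\{0,\dots,N/2-1\}$ or both lie in $\{N/2,\dots,N-1\}$, and: for $n$ even, $M^{(n)}_{am}=\mathcal{F}^{N/2}_{am}$ if $a,m<N/2$ and $M^{(n)}_{am}=\mathcal{F}^{N/2}_{a-N/2,\,m-N/2}$ if $a,m\ge N/2$; for $n$ odd, $M^{(n)}_{am}=e^{i\pi(n-2m)/N}\mathcal{F}^{N/2}_{am}$ if $a,m<N/2$ and $M^{(n)}_{am}=e^{i\pi(n-(2m-N))/N}\mathcal{F}^{N/2}_{a-N/2,\,m-N/2}$ if $a,m\ge N/2$.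
   Context: On $L^2(\mathbb{R})$ with $[\widehat{x},\widehat{p}]=i\hbar$, $|x\rangle_x$ are position eigen-distributions, and $\Phi_m^{(0,0)}=N^{-1/2}\sum_{k\in\mathbb{Z}}|m/N+k\rangle_x$ ($m\in\mathbb{Z}$; $\Phi_{m+N}^{(0,0)}=\Phi_m^{(0,0)}$). $\mathcal{H}_\hbar(0)$ is the $N$-dimensional space spanned by $\Phi_0^{(0,0)},\dots,\Phi_{N-1}^{(0,0)}$, equipped with the paper's inner product $(\cdot,\cdot)_P$, with respect to which these vectors are orthonormal. $X^s=e^{is\widehat{x}/\hbar}$, $Y^s=e^{is\widehat{p}/\hbar}$ for real $s$. Projections $L,R,E_x,O_x$ are multiplication in position representation by the indicators of $[0,1/2)+\mathbb{Z}$, $[1/2,1)+\mathbb{Z}$, $[0,1)+2\mathbb{Z}$, $[1,2)+2\mathbb{Z}$; $B,T,E_p,O_p$ are the analogous projections in momentum representation (momentum eigen-distributions normalized by $\langle x|p\rangle=(2\pi\hbar)^{-1/2}e^{ixp/\hbar}$) onto $[0,1/2)+\mathbb{Z}$, $[1/2,1)+\mathbb{Z}$, $[0,1)+2\mathbb{Z}$, $[1,2)+2\mathbb{Z}$; all act on $\delta$-comb distributions in the natural way. $S=\exp\!\left(-\frac{i\log2}{2\hbar}(\widehat{x}\widehat{p}+\widehat{p}\widehat{x})\right)$, acting by $S|x\rangle_x=\sqrt2|2x\rangle_x$. The propagator is $F=S(L+X^{-1}R)(E_p+Y^{-1/2}O_p)$, which the paper also writes as $(E_x+X^{-1/2}O_x)(B+Y^{-1}T)S$;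 $F$ maps $\mathcal{H}_\hbar(0)$ into itself. *)

theory Defs
  imports "HOL-Analysis.Analysis"
begin

text \<open>A (periodic) delta-comb distribution  sum_x c(x) |x>_x  is represented by its
  coefficient function c :: real => complex (c x = coefficient of the position
  eigen-distribution |x>_x).\<close>

type_synonym comb = "real \<Rightarrow> complex"

definition Phi :: "nat \<Rightarrow> int \<Rightarrow> comb" where
  "Phi N m = (\<lambda>x. if (\<exists>k::int. x = real_of_int m / real N + real_of_int k)
                    then complex_of_real (1 / sqrt (real N)) else 0)"

text \<open>The paper's inner product on H_hbar(0) (with respect to which Phi_0..Phi_{N-1}
  are orthonormal): for psi = sum_m b_m Phi_m one has b_m = sqrt N * psi(m/N).\<close>
definition ipP :: "nat \<Rightarrow> comb \<Rightarrow> comb \<Rightarrow> complex" where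
  "ipP N \<phi> \<psi> = of_nat N * (\<Sum>j<N. cnj (\<phi> (real j / real N)) * \<psi> (real j / real N))"

text \<open>X^s = exp(i s x/hbar) (multiplication), Y^s = exp(i s p/hbar) (translation:
  (Y^s psi)(x) = psi(x+s), so Y^s |a> = |a - s>), S|x> = sqrt 2 |2x>.\<close>
definition Xop :: "real \<Rightarrow> real \<Rightarrow> comb \<Rightarrow> comb" where
  "Xop h s \<psi> = (\<lambda>x. exp (\<i> * complex_of_real (s * x / h)) * \<psi> x)"

definition Yop :: "real \<Rightarrow> comb \<Rightarrow> comb" where
  "Yop s \<psi> = (\<lambda>x. \<psi> (x + s))"

definition Sop :: "comb \<Rightarrow> comb" where
  "Sop \<psi> = (\<lambda>y. complex_of_real (sqrt 2) * \<psi> (y / 2))"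

definition setL :: "real set" where "setL = {x. x - of_int \<lfloor>x\<rfloor> < 1/2}"
definition setR :: "real set" where "setR = {x. x - of_int \<lfloor>x\<rfloor> \<ge> 1/2}"
definition setE :: "real set" where "setE = {x. even \<lfloor>x\<rfloor>}"
definition setO :: "real set" where "setO = {x. odd \<lfloor>x\<rfloor>}"

definition posproj :: "real set \<Rightarrow> comb \<Rightarrow> comb" where
  "posproj A \<psi> = (\<lambda>x. (if x \<in> A then 1 else 0) * \<psi> x)"

text \<open>A comb supported in (1/M)Z and
  of period P (M,P positive integers) has momentum representation (with
  <x|p> = (2 pi hbar)^(-1/2) exp(ixp/hbar)) supported on p_s = 2 pi hbar s / P with
  coefficients d_s = (2 pi hbar)^(1/2)/P * sum_{r<PM} c(r/M) exp(-i (r/M) p_s/hbar),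
  of period PM in s.  If A is invariant under p -> p + 2 pi hbar M, multiplying by the
  indicator of A and transforming back gives the comb below.\<close>
definition valid_res :: "real \<Rightarrow> nat \<Rightarrow> nat \<Rightarrow> real set \<Rightarrow> comb \<Rightarrow> bool" where
  "valid_res h M P A c \<longleftrightarrow> M > 0 \<and> P > 0 \<and>
     (\<forall>x. c x \<noteq> 0 \<longrightarrow> (\<exists>k::int. x = real_of_int k / real M)) \<and>
     (\<forall>x. c (x + real P) = c x) \<and>
     (\<forall>p. p \<in> A \<longleftrightarrow> p + 2 * pi * h * real M \<in> A)"

definition momproj_res :: "real \<Rightarrow> nat \<Rightarrow> nat \<Rightarrow> real set \<Rightarrow> comb \<Rightarrow> comb" where
  "momproj_res h M P A c = (\<lambda>x.
     if (\<exists>k::int. x = real_of_int k / real M) then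
       (1 / of_nat (P * M)) *
       (\<Sum>s<P * M. (if 2 * pi * h * real s / real P \<in> A then 1 else 0) *
          (\<Sum>r<P * M. c (real r / real M) *
             exp (\<i> * complex_of_real ((x - real r / real M) * (2 * pi * h * real s / real P) / h))))
     else 0)"

text \<open>The momentum projection itself: the common value for all admissible
  resolutions (M,P) (it does not depend on the resolution).\<close>
definition momproj :: "real \<Rightarrow> real set \<Rightarrow> comb \<Rightarrow> comb" where
  "momproj h A c = (THE \<phi>. \<exists>M P. valid_res h M P A c \<and> \<phi> = momproj_res h M P A c)"

definition Fop :: "real \<Rightarrow> comb \<Rightarrow> comb" where
  "Fop h \<psi> = (let \<psi>1 = (\<lambda>x. momproj h setE \<psi> x + Yop (-1/2) (momproj h setO \<psi>) x);
                  \<psi>2 = (\<lambda>x. posproj setL \<psi>1 x + Xop h (-1) (posproj setR \<psi>1) x)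
              in Sop \<psi>2)"

definition FinvN :: "nat \<Rightarrow> nat \<Rightarrow> nat \<Rightarrow> complex" where
  "FinvN N n a = exp (2 * pi * \<i> * of_nat n * of_nat a / of_nat N) / complex_of_real (sqrt (real N))"

definition Fhalf :: "nat \<Rightarrow> nat \<Rightarrow> nat \<Rightarrow> complex" where
  "Fhalf N j k = exp (- 2 * pi * \<i> * of_nat j * of_nat k / of_nat (N div 2))
                 / complex_of_real (sqrt (real (N div 2)))"

definition Mmat :: "nat \<Rightarrow> nat \<Rightarrow> nat \<Rightarrow> nat \<Rightarrow> complex" where
  "Mmat N n a m =
     (if a < N div 2 \<and> m < N div 2 then
        (if even n then Fhalf N a m
         else exp (\<i> * pi * (of_nat n - 2 * of_nat m) / of_nat N) * Fhalf N a m)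
      else if N div 2 \<le> a \<and> N div 2 \<le> m then
        (if even n then Fhalf N (a - N div 2) (m - N div 2)
         else exp (\<i> * pi * (of_nat n - (2 * of_nat m - of_nat N)) / of_nat N)
              * Fhalf N (a - N div 2) (m - N div 2))
      else 0)"

end

theory Submission
  imports Defs
begin

lemma cis_eqI: assumes "a = b + 2*pi* of_int k" shows "cis a = cis b"
proof -
  have "cis a = cis b * cis (2*pi* of_int k)" using assms by (simp only: cis_mult)
  also have "cis (2*pi* of_int k) = 1" by (rule cis_multiple_2pi) simp
  finally show ?thesis by simp
qed

lemma sum_mult_split: fixes a b :: nat shows "(\<Sum>r<a*b. f r) = (\<Sum>k<a. \<Sum>u<b. f (k*b+u))"
proof -
  have "(\<Sum>r<a*b. f r) = (\<Sum>k<a. sum f {k*b..<k*b+b})"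
    using sum.nat_group[of f b a] by simp
  also have "\<dots> = (\<Sum>k<a. \<Sum>u<b. f (k*b+u))"
  proof (rule sum.cong[OF refl])
    fix k
    have "sum f {0+k*b..<b+k*b} = (\<Sum>u=0..<b. f (u+k*b))" by (rule sum.shift_bounds_nat_ivl)
    then show "sum f {k*b..<k*b+b} = (\<Sum>u<b. f (k*b+u))"
      by (simp add: atLeast0LessThan add.commute)
  qed
  finally show ?thesis .
qed

lemma geom_cis:
  assumes q: "q > 0"
  shows "(\<Sum>u<q. cis (2*pi* of_int j * real u / real q)) = (if int q dvd j then of_nat q else 0)"
proof (cases "int q dvd j")
  case True
  then obtain l where l: "j = int q * l" by blast
  have "cis (2*pi* of_int j * real u / real q) = 1" for u
  proof -
    have "2*pi* of_int j * real u / real q = 2*pi* of_int (l * int u)" using q by (simp add: l)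
    then show ?thesis by (simp add: cis_eqI[of _ 0 "l * int u"])
  qed
  then show ?thesis using True by simp
next
  case False
  define z where "z = cis (2*pi* of_int j / real q)"
  have zu: "cis (2*pi* of_int j * real u / real q) = z ^ u" for u
  proof -
    have "z ^ u = cis (real u * (2*pi* of_int j / real q))" unfolding z_def by (rule Complex.DeMoivre)
    then show ?thesis by (simp add: field_simps)
  qed
  have zq: "z ^ q = 1"
  proof -
    have "z ^ q = cis (real q * (2*pi* of_int j / real q))" unfolding z_def by (rule Complex.DeMoivre)
    also have "\<dots> = cis (0 + 2*pi* of_int j)" using q by simp
    also have "\<dots> = cis 0" by (rule cis_eqI) simp
    finally show ?thesis by simp
  qed
  have "z \<noteq> 1"
  proof
    assume "z = 1"
    then have "exp (\<i> * complex_of_real (2*pi* of_int j / real q)) = 1" by (simp add: z_def cis_conv_exp)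
    then obtain n :: int where "2*pi* of_int j / real q = of_int (2*n) * pi" by (auto simp: exp_eq_1)
    then have "of_int j = real q * of_int n" using q by (simp add: field_simps)
    then have "j = int q * n" by (metis of_int_eq_iff of_int_mult of_int_of_nat_eq)
    then show False using False by simp
  qed
  then have "(\<Sum>u<q. z ^ u) = 0" using zq by (simp add: geometric_sum)
  then show ?thesis using False by (simp add: zu)
qed

lemma setE_shift: "x + 2 * of_int k \<in> setE \<longleftrightarrow> x \<in> setE"
proof -
  have "x + 2 * of_int k = x + of_int (2 * k)" by simp
  then have "\<lfloor>x + 2 * of_int k\<rfloor> = \<lfloor>x\<rfloor> + 2 * k" by (simp only: floor_add_int)
  then show ?thesis by (simp add: setE_def)
qed

lemma setO_iff: "x \<in> setO \<longleftrightarrow> x \<notin> setE"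
  by (simp add: setO_def setE_def)

lemma setO_shift: "x + 2 * of_int k \<in> setO \<longleftrightarrow> x \<in> setO"
  by (simp add: setO_iff setE_shift)

lemma setE_inv:
  assumes inv: "\<forall>p. p \<in> setE \<longleftrightarrow> p + t \<in> setE"
  shows "\<exists>k::int. t = 2 * of_int k"
proof -
  have "(0::real) \<in> setE" by (simp add: setE_def)
  then have tE: "t \<in> setE" using inv[rule_format, of 0] by simp
  define d where "d = t - of_int \<lfloor>t\<rfloor>"
  have d0: "d \<ge> 0" "d < 1" using floor_correct[of t] unfolding d_def by (simp, linarith)
  have "d = 0"
  proof (rule ccontr)
    assume "d \<noteq> 0"
    then have dp: "d > 0" using d0 by simp
    have "\<lfloor>1 - d\<rfloor> = 0" using dp d0 by (simp add: floor_eq_iff)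
    then have "1 - d \<in> setE" by (simp add: setE_def)
    then have "1 - d + t \<in> setE" using inv[rule_format, of "1 - d"] by blast
    moreover have "1 - d + t = of_int (\<lfloor>t\<rfloor> + 1)" unfolding d_def by simp
    ultimately have "even (\<lfloor>t\<rfloor> + 1)" by (simp add: setE_def)
    moreover have "even \<lfloor>t\<rfloor>" using tE by (simp add: setE_def)
    ultimately show False by simp
  qed
  then have "t = of_int \<lfloor>t\<rfloor>" unfolding d_def by simp
  moreover have "even \<lfloor>t\<rfloor>" using tE by (simp add: setE_def)
  moreover obtain k where "\<lfloor>t\<rfloor> = 2 * k" using calculation(2) by (rule evenE)
  ultimately show ?thesis by (intro exI[of _ k]) simp
qed

lemma setO_inv:
  assumes inv: "\<forall>p. p \<in> setO \<longleftrightarrow> p + t \<in> setO"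
  shows "\<exists>k::int. t = 2 * of_int k"
  using inv by (intro setE_inv) (simp add: setO_iff)

lemma Phi_period: "Phi N m (x + of_int k) = Phi N m x"
proof -
  have "(\<exists>k'::int. x + of_int k = real_of_int m / real N + of_int k') \<longleftrightarrow>
        (\<exists>k'::int. x = real_of_int m / real N + of_int k')"
  proof
    assume "\<exists>k'::int. x + of_int k = real_of_int m / real N + of_int k'"
    then obtain k' where "x + of_int k = real_of_int m / real N + of_int k'" by blast
    then show "\<exists>k'::int. x = real_of_int m / real N + of_int k'" by (intro exI[of _ "k' - k"]) simp
  next
    assume "\<exists>k'::int. x = real_of_int m / real N + of_int k'"
    then obtain k' where "x = real_of_int m / real N + of_int k'" by blast
    then show "\<exists>k'::int. x + of_int k = real_of_int m / real N + of_int k'" by (intro exI[of _ "k' + k"]) simp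
  qed
  then show ?thesis by (simp add: Phi_def)
qed

lemma Phi_grid:
  assumes N: "N > 0" and m: "m < N" and q: "q > 0" and u: "u < 2*N*q"
  shows "Phi N (int m) (real u / real (2*N*q)) = (if u = 2*q*m then complex_of_real (1 / sqrt (real N)) else 0)"
proof -
  have "(\<exists>k::int. real u / real (2*N*q) = real_of_int (int m) / real N + of_int k) \<longleftrightarrow> u = 2*q*m"
  proof
    assume "\<exists>k::int. real u / real (2*N*q) = real_of_int (int m) / real N + of_int k"
    then obtain k::int where k: "real u / real (2*N*q) = real m / real N + of_int k" by auto
    then have "real u = 2 * real q * real m + 2 * real N * real q * of_int k"
      using N q by (simp add: field_simps)
    then have "real_of_int (int u) = real_of_int (2 * int q * int m + 2 * int N * int q * k)" by simp
    then have e: "int u = 2 * int q * int m + 2 * int N * int q * k" by (simp only: of_int_eq_iff)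
    have "int u < int (2*N*q)" using u by (simp only: of_nat_less_iff)
    then have ui: "int u < 2 * int N * int q" by simp
    have qm0: "2 * int q * int m \<ge> 0" by simp
    have "k = 0"
    proof (rule ccontr)
      assume "k \<noteq> 0"
      then have "k \<ge> 1 \<or> k \<le> -1" by linarith
      then show False
      proof
        assume "k \<ge> 1"
        then have "2 * int N * int q * k \<ge> 2 * int N * int q" using N q by simp
        then show False using e ui qm0 by linarith
      next
        assume "k \<le> -1"
        then have "2 * int N * int q * k \<le> 2 * int N * int q * (-1)"
          by (intro mult_left_mono) auto
        then have "2 * int N * int q * k \<le> - (2 * int N * int q)" by simp
        moreover have "2 * int q * int m < 2 * int N * int q" using m q by simp
        ultimately show False using e by linarith
      qed
    qed
    then have "int u = int (2*q*m)" using e by simp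
    then show "u = 2*q*m" by (simp only: of_nat_eq_iff)
  next
    assume "u = 2*q*m"
    then show "\<exists>k::int. real u / real (2*N*q) = real_of_int (int m) / real N + of_int k"
      using N q by (intro exI[of _ 0]) (simp add: field_simps)
  qed
  then show ?thesis by (simp add: Phi_def)
qed

definition G :: "nat \<Rightarrow> nat \<Rightarrow> real set \<Rightarrow> comb" where
  "G N m A x = (if \<exists>j::int. x = of_int j / real (2*N) then
     complex_of_real (1 / (2 * real N * sqrt (real N))) *
     (\<Sum>v<2*N. (if real v / real N \<in> A then 1 else 0) * cis (2*pi*(x - real m / real N)*real v))
     else 0)"

lemma sum_single0:
  fixes P :: nat
  assumes "P > 0" and "\<And>v. v \<noteq> 0 \<Longrightarrow> v < P \<Longrightarrow> g v = (0::complex)"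
  shows "(\<Sum>v<P. g v) = g 0"
proof -
  have "(\<Sum>v<P. g v) = (\<Sum>v<P. if v = 0 then g 0 else 0)"
    using assms(2) by (intro sum.cong) auto
  also have "\<dots> = (if 0 \<in> {..<P} then g 0 else 0)" by (rule sum.delta[OF finite_lessThan])
  also have "\<dots> = g 0" using assms(1) by simp
  finally show ?thesis .
qed

lemma momproj_res_Phi:
  assumes N: "N > 0" and m: "m < N" and h: "h = 1 / (2*pi*real N)"
    and val: "valid_res h M P A (Phi N (int m))"
    and A2: "\<And>p k. p + 2 * of_int k \<in> A \<longleftrightarrow> p \<in> A"
    and Ainv: "\<And>t. \<forall>p. p \<in> A \<longleftrightarrow> p + t \<in> A \<Longrightarrow> \<exists>k::int. t = 2 * of_int k"
  shows "momproj_res h M P A (Phi N (int m)) = G N m A"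
proof -
  define c where "c = Phi N (int m)"
  have M0: "M > 0" and P0: "P > 0" and inv: "\<forall>p. p \<in> A \<longleftrightarrow> p + 2 * pi * h * real M \<in> A"
    using val by (auto simp: valid_res_def)
  have hM: "2 * pi * h * real M = real M / real N" using N by (simp add: h)
  obtain k :: int where k: "real M / real N = 2 * of_int k" using Ainv[of "real M / real N"] inv hM by auto
  have "real M = 2 * real N * of_int k" using k N by (simp add: field_simps)
  then have kpos: "k > 0" using M0 N by (smt (verit) of_int_le_0_iff of_nat_0_less_iff zero_less_mult_iff)
  define q where "q = nat k"
  have q0: "q > 0" using kpos by (simp add: q_def)
  have "real M = real (2*N*q)" using \<open>real M = 2 * real N * of_int k\<close> kpos by (simp add: q_def)
  then have Mq: "M = 2*N*q" by (simp only: of_nat_eq_iff)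
  have hpos: "h > 0" using N by (simp add: h)
  show ?thesis
  proof
    fix x
    show "momproj_res h M P A (Phi N (int m)) x = G N m A x"
    proof (cases "\<exists>j::int. x = real_of_int j / real M")
      case False
      have "\<not> (\<exists>j::int. x = of_int j / real (2*N))"
      proof
        assume "\<exists>j::int. x = of_int j / real (2*N)"
        then obtain j :: int where "x = of_int j / real (2*N)" by blast
        then have "x = of_int (j * int q) / real M" using q0 by (simp add: Mq)
        then show False using False by blast
      qed
      then show ?thesis using False by (simp add: momproj_res_def G_def)
    next
      case True
      then obtain j :: int where xj: "x = real_of_int j / real M" by blast
      have I1: "(\<Sum>r<P * M. c (real r / real M) *
             exp (\<i> * complex_of_real ((x - real r / real M) * (2 * pi * h * real s / real P) / h)))
           = (if P dvd s then of_nat P * complex_of_real (1 / sqrt (real N)) * cis (2*pi*(x - real m / real N)*real s / real P) else 0)"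
        for s
      proof -
        have "(\<Sum>r<P * M. c (real r / real M) *
             exp (\<i> * complex_of_real ((x - real r / real M) * (2 * pi * h * real s / real P) / h)))
           = (\<Sum>r<P * M. c (real r / real M) * cis (2*pi*(x - real r / real M) * real s / real P))"
        proof (rule sum.cong[OF refl])
          fix r
          have e: "(x - real r / real M) * (2 * pi * h * real s / real P) / h = 2*pi*(x - real r / real M) * real s / real P"
            using hpos P0 M0 by (simp add: field_simps)
          show "c (real r / real M) * exp (\<i> * complex_of_real ((x - real r / real M) * (2 * pi * h * real s / real P) / h))
             = c (real r / real M) * cis (2*pi*(x - real r / real M) * real s / real P)"
            by (simp only: e cis_conv_exp)
        qed
        also have "\<dots> = (\<Sum>kk<P. \<Sum>u<M. c (real (kk*M+u) / real M) * cis (2*pi*(x - real (kk*M+u) / real M) * real s / real P))"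
          by (rule sum_mult_split)
        also have "\<dots> = (\<Sum>kk<P. complex_of_real (1 / sqrt (real N)) * cis (2*pi*(x - real m / real N)*real s / real P) * cis (2*pi * of_int (- int s) * real kk / real P))"
        proof (rule sum.cong[OF refl])
          fix kk
          have "(\<Sum>u<M. c (real (kk*M+u) / real M) * cis (2*pi*(x - real (kk*M+u) / real M) * real s / real P))
              = (\<Sum>u<M. if u = 2*q*m then complex_of_real (1 / sqrt (real N)) * cis (2*pi*(x - real (kk*M+u) / real M) * real s / real P) else 0)"
          proof (rule sum.cong[OF refl])
            fix u assume "u \<in> {..<M}"
            then have u: "u < 2*N*q" by (simp add: Mq)
            have "real (kk*M+u) / real M = real u / real M + of_int (int kk)" using M0 by (simp add: field_simps)
            then have "c (real (kk*M+u) / real M) = c (real u / real M)" unfolding c_def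
              using Phi_period[of N "int m" "real u / real M" "int kk"] by simp
            also have "\<dots> = (if u = 2*q*m then complex_of_real (1 / sqrt (real N)) else 0)"
              unfolding c_def Mq by (rule Phi_grid[OF N m q0 u])
            finally show "c (real (kk*M+u) / real M) * cis (2*pi*(x - real (kk*M+u) / real M) * real s / real P)
              = (if u = 2*q*m then complex_of_real (1 / sqrt (real N)) * cis (2*pi*(x - real (kk*M+u) / real M) * real s / real P) else 0)"
              by simp
          qed
          also have "\<dots> = complex_of_real (1 / sqrt (real N)) * cis (2*pi*(x - real (kk*M+2*q*m) / real M) * real s / real P)"
            using m q0 by (simp add: sum.delta Mq)
          also have "cis (2*pi*(x - real (kk*M+2*q*m) / real M) * real s / real P)
              = cis (2*pi*(x - real m / real N)*real s / real P + 2*pi * of_int (- int s) * real kk / real P)"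
            using N q0 P0 by (intro arg_cong[where f=cis]) (simp add: Mq field_simps)
          also have "\<dots> = cis (2*pi*(x - real m / real N)*real s / real P) * cis (2*pi * of_int (- int s) * real kk / real P)"
            by (simp add: cis_mult)
          finally show "(\<Sum>u<M. c (real (kk*M+u) / real M) * cis (2*pi*(x - real (kk*M+u) / real M) * real s / real P))
              = complex_of_real (1 / sqrt (real N)) * cis (2*pi*(x - real m / real N)*real s / real P) * cis (2*pi * of_int (- int s) * real kk / real P)"
            by (simp add: mult.assoc)
        qed
        also have "\<dots> = complex_of_real (1 / sqrt (real N)) * cis (2*pi*(x - real m / real N)*real s / real P) * (\<Sum>kk<P. cis (2*pi * of_int (- int s) * real kk / real P))"
          by (simp add: sum_distrib_left)
        also have "(\<Sum>kk<P. cis (2*pi * of_int (- int s) * real kk / real P)) = (if int P dvd - int s then of_nat P else 0)"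
          by (rule geom_cis[OF P0])
        finally show ?thesis by (simp add: mult_ac)
      qed
      define ind' where "ind' t = (if real t / real N \<in> A then 1 else (0::complex))" for t :: nat
      define S where "S = (\<Sum>v<2*N. ind' v * cis (2*pi*(x - real m / real N)*real v))"
      have I2: "(\<Sum>s<P * M. (if 2 * pi * h * real s / real P \<in> A then 1 else 0) *
             (\<Sum>r<P * M. c (real r / real M) *
               exp (\<i> * complex_of_real ((x - real r / real M) * (2 * pi * h * real s / real P) / h))))
           = of_nat P * complex_of_real (1 / sqrt (real N)) * (\<Sum>t<M. ind' t * cis (2*pi*(x - real m / real N)*real t))"
      proof -
        define f where "f s = (if 2 * pi * h * real s / real P \<in> A then 1 else 0) *
             (if P dvd s then of_nat P * complex_of_real (1 / sqrt (real N)) * cis (2*pi*(x - real m / real N)*real s / real P) else 0)" for s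
        have "(\<Sum>s<P * M. (if 2 * pi * h * real s / real P \<in> A then 1 else 0) *
             (\<Sum>r<P * M. c (real r / real M) *
               exp (\<i> * complex_of_real ((x - real r / real M) * (2 * pi * h * real s / real P) / h))))
           = (\<Sum>s<P * M. f s)" by (simp only: I1 f_def)
        also have "\<dots> = (\<Sum>s<M * P. f s)" by (simp only: mult.commute[of P M])
        also have "\<dots> = (\<Sum>t<M. \<Sum>v<P. f (t*P+v))" by (rule sum_mult_split)
        also have "\<dots> = (\<Sum>t<M. f (t*P))"
        proof (rule sum.cong[OF refl])
          fix t
          have "(\<Sum>v<P. f (t*P+v)) = f (t*P+0)"
          proof (rule sum_single0[OF P0])
            fix v :: nat assume "v \<noteq> 0" "v < P"
            then have "\<not> P dvd v" using nat_dvd_not_less by blast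
            then have "\<not> P dvd t*P+v" by (simp add: dvd_add_right_iff)
            then show "f (t*P+v) = 0" by (simp add: f_def)
          qed
          then show "(\<Sum>v<P. f (t*P+v)) = f (t*P)" by simp
        qed
        also have "\<dots> = (\<Sum>t<M. of_nat P * complex_of_real (1 / sqrt (real N)) * (ind' t * cis (2*pi*(x - real m / real N)*real t)))"
        proof (rule sum.cong[OF refl])
          fix t
          have e1: "2 * pi * h * real (t*P) / real P = real t / real N" using P0 N by (simp add: h field_simps)
          have e2: "2*pi*(x - real m / real N)*real (t*P) / real P = 2*pi*(x - real m / real N)*real t" using P0 by simp
          show "f (t*P) = of_nat P * complex_of_real (1 / sqrt (real N)) * (ind' t * cis (2*pi*(x - real m / real N)*real t))"
            unfolding f_def e1 e2 ind'_def by simp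
        qed
        also have "\<dots> = of_nat P * complex_of_real (1 / sqrt (real N)) * (\<Sum>t<M. ind' t * cis (2*pi*(x - real m / real N)*real t))"
          by (simp add: sum_distrib_left)
        finally show ?thesis .
      qed
      have I3: "(\<Sum>t<M. ind' t * cis (2*pi*(x - real m / real N)*real t)) = (if int q dvd j then of_nat q else 0) * S"
      proof -
        have "(\<Sum>t<M. ind' t * cis (2*pi*(x - real m / real N)*real t))
            = (\<Sum>u<q. \<Sum>v<2*N. ind' (u*(2*N)+v) * cis (2*pi*(x - real m / real N)*real (u*(2*N)+v)))"
          unfolding Mq mult.commute[of "2*N" q] by (rule sum_mult_split)
        also have "\<dots> = (\<Sum>u<q. cis (2*pi* of_int j * real u / real q) * S)"
        proof (rule sum.cong[OF refl])
          fix u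
          show "(\<Sum>v<2*N. ind' (u*(2*N)+v) * cis (2*pi*(x - real m / real N)*real (u*(2*N)+v)))
              = cis (2*pi* of_int j * real u / real q) * S"
            unfolding S_def sum_distrib_left
          proof (rule sum.cong[OF refl])
            fix v
            have "real (u*(2*N)+v) / real N = real v / real N + 2 * of_int (int u)" using N by (simp add: field_simps)
            moreover have "real v / real N + 2 * of_int (int u) \<in> A \<longleftrightarrow> real v / real N \<in> A" by (rule A2)
            ultimately have i: "ind' (u*(2*N)+v) = ind' v" unfolding ind'_def by simp
            have "cis (2*pi*(x - real m / real N)*real (u*(2*N)+v))
                = cis ((2*pi*(x - real m / real N)*real v + 2*pi* of_int j * real u / real q) + 2*pi* of_int (- (2 * int m * int u)))"
              using N q0 by (intro arg_cong[where f=cis]) (simp add: xj Mq field_simps)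
            also have "\<dots> = cis (2*pi*(x - real m / real N)*real v + 2*pi* of_int j * real u / real q)"
              by (rule cis_eqI[where k="- (2 * int m * int u)"]) simp
            also have "\<dots> = cis (2*pi* of_int j * real u / real q) * cis (2*pi*(x - real m / real N)*real v)"
              by (simp add: cis_mult add.commute)
            finally show "ind' (u*(2*N)+v) * cis (2*pi*(x - real m / real N)*real (u*(2*N)+v))
              = cis (2*pi* of_int j * real u / real q) * (ind' v * cis (2*pi*(x - real m / real N)*real v))"
              using i by simp
          qed
        qed
        also have "\<dots> = (\<Sum>u<q. cis (2*pi* of_int j * real u / real q)) * S" by (simp add: sum_distrib_right)
        also have "\<dots> = (if int q dvd j then of_nat q else 0) * S" by (simp only: geom_cis[OF q0])
        finally show ?thesis .
      qed
      have L: "momproj_res h M P A (Phi N (int m)) x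
           = 1 / of_nat (P * M) * (of_nat P * complex_of_real (1 / sqrt (real N)) * ((if int q dvd j then of_nat q else 0) * S))"
        using True unfolding momproj_res_def c_def[symmetric] I2 I3 by simp
      show ?thesis
      proof (cases "int q dvd j")
        case True
        then obtain l where l: "j = int q * l" by blast
        have xl: "x = of_int l / real (2*N)" using q0 by (simp add: xj l Mq)
        have "1 / real (P*M) * (real P * (1 / sqrt (real N)) * real q) = 1 / (2 * real N * sqrt (real N))"
          using P0 q0 N by (simp add: Mq field_simps)
        then have co: "1 / of_nat (P*M) * (of_nat P * complex_of_real (1 / sqrt (real N)) * of_nat q)
            = complex_of_real (1 / (2 * real N * sqrt (real N)))"
          by (metis (mono_tags, lifting) of_real_1 of_real_divide of_real_mult of_real_of_nat_eq)
        have "G N m A x = complex_of_real (1 / (2 * real N * sqrt (real N))) * S"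
          unfolding G_def S_def ind'_def using xl by auto
        have eq: "(if int q dvd j then of_nat q else 0) = (of_nat q :: complex)" using True by simp
        have "momproj_res h M P A (Phi N (int m)) x
           = (1 / of_nat (P * M) * (of_nat P * complex_of_real (1 / sqrt (real N)) * of_nat q)) * S"
          unfolding L eq by (simp only: mult.assoc)
        also have "\<dots> = complex_of_real (1 / (2 * real N * sqrt (real N))) * S" by (simp only: co)
        finally show ?thesis using \<open>G N m A x = _\<close> by simp
      next
        case False
        have "\<not> (\<exists>j'::int. x = of_int j' / real (2*N))"
        proof
          assume "\<exists>j'::int. x = of_int j' / real (2*N)"
          then obtain j' :: int where "x = of_int j' / real (2*N)" by blast
          then have "real_of_int j = real_of_int (int q * j')" using xj q0 N by (simp add: Mq field_simps)
          then have "j = int q * j'" by (simp only: of_int_eq_iff)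
          then show False using False by simp
        qed
        then show ?thesis unfolding L G_def using False by simp
      qed
    qed
  qed
qed

lemma momproj_Phi:
  assumes N: "N > 0" and m: "m < N" and h: "h = 1 / (2*pi*real N)"
    and A2: "\<And>p k. p + 2 * of_int k \<in> A \<longleftrightarrow> p \<in> A"
    and Ainv: "\<And>t. \<forall>p. p \<in> A \<longleftrightarrow> p + t \<in> A \<Longrightarrow> \<exists>k::int. t = 2 * of_int k"
  shows "momproj h A (Phi N (int m)) = G N m A"
  unfolding momproj_def
proof (rule the_equality)
  have val: "valid_res h (2*N) 1 A (Phi N (int m))"
    unfolding valid_res_def
  proof (intro conjI allI impI)
    show "0 < 2*N" "(0::nat) < 1" using N by auto
  next
    fix x assume "Phi N (int m) x \<noteq> 0"
    then obtain k :: int where "x = real_of_int (int m) / real N + of_int k" by (auto simp: Phi_def split: if_splits)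
    then have "x = real_of_int (2 * int m + 2 * int N * k) / real (2*N)" using N by (simp add: field_simps)
    then show "\<exists>k::int. x = real_of_int k / real (2*N)" by blast
  next
    fix x
    show "Phi N (int m) (x + real 1) = Phi N (int m) x" using Phi_period[of N "int m" x 1] by simp
  next
    fix p
    have e: "2 * pi * h * real (2*N) = 2 * of_int 1" using N by (simp add: h)
    show "p \<in> A \<longleftrightarrow> p + 2 * pi * h * real (2*N) \<in> A" unfolding e using A2[of p 1] by simp
  qed
  show "\<exists>M P. valid_res h M P A (Phi N (int m)) \<and> G N m A = momproj_res h M P A (Phi N (int m))"
    using val momproj_res_Phi[OF N m h val A2 Ainv] by metis
next
  fix \<phi> assume "\<exists>M P. valid_res h M P A (Phi N (int m)) \<and> \<phi> = momproj_res h M P A (Phi N (int m))"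
  then obtain M P where "valid_res h M P A (Phi N (int m))" "\<phi> = momproj_res h M P A (Phi N (int m))" by blast
  then show "\<phi> = G N m A" using momproj_res_Phi[OF N m h _ A2 Ainv] by simp
qed

lemma Phi_at:
  assumes N: "N > 0" and n: "n < N" and j: "j < N"
  shows "Phi N (int n) (real j / real N) = (if j = n then complex_of_real (1 / sqrt (real N)) else 0)"
proof -
  have "real j / real N = real (2*j) / real (2*N*1)" by simp
  moreover have "2*j < 2*N*1" using j by simp
  ultimately show ?thesis using Phi_grid[OF N n zero_less_one, of "2*j"] by simp
qed

lemma sum_two_blocks: fixes N :: nat shows "(\<Sum>v<2*N. f v) = (\<Sum>v<N. f v) + (\<Sum>w<N. f (N + w))"
proof -
  have "(\<Sum>v<2*N. f v) = (\<Sum>k<2. \<Sum>w<N. f (k*N + w))" by (rule sum_mult_split)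
  also have "\<dots> = (\<Sum>v<N. f v) + (\<Sum>w<N. f (N + w))" by (simp add: numeral_2_eq_2)
  finally show ?thesis .
qed

lemma sum_pairs: fixes K :: nat shows "(\<Sum>w<K*2. f w) = (\<Sum>t<K. f (2*t) + f (2*t+1))"
proof -
  have "(\<Sum>w<K*2. f w) = (\<Sum>t<K. \<Sum>e<2. f (t*2 + e))" by (rule sum_mult_split)
  also have "\<dots> = (\<Sum>t<K. f (2*t) + f (2*t+1))" by (simp add: numeral_2_eq_2 mult.commute)
  finally show ?thesis .
qed

lemma cis_pi_nat: "cis (pi * real k) = (-1) ^ k"
proof -
  have "cis (real k * pi) = cis pi ^ k" by (rule Complex.DeMoivre[symmetric])
  then show ?thesis by (simp add: mult.commute)
qed

lemma LHS_eval:
  assumes N: "N > 0" and ev: "even N" and n: "n < N" and m: "m < N"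
  shows "ipP N (Phi N (int n)) (Fop (1 / (2 * pi * real N)) (Phi N (int m)))
       = complex_of_real (sqrt 2 / real N) *
         (\<Sum>t<N div 2. cis (2*pi*(real n / real (2*N) - real m / real N) * real (2*t + (if even n then 0 else 1))))"
proof -
  define K where "K = N div 2"
  have NK: "N = K*2" using ev by (simp add: K_def)
  have K0: "K > 0" using N NK by simp
  define h where "h = 1 / (2 * pi * real N)"
  define \<psi> where "\<psi> = Phi N (int m)"
  have mE: "momproj h setE \<psi> = G N m setE"
    unfolding \<psi>_def by (rule momproj_Phi[OF N m h_def setE_shift setE_inv])
  have mO: "momproj h setO \<psi> = G N m setO"
    unfolding \<psi>_def by (rule momproj_Phi[OF N m h_def setO_shift setO_inv])
  define y where "y = real n / real (2*N)"
  have y0: "0 \<le> y" "y < 1/2" using n N by (auto simp: y_def field_simps)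
  have yfl: "\<lfloor>y\<rfloor> = 0" using y0 by (simp add: floor_eq_iff)
  have yL: "y \<in> setL" using yfl y0 by (simp add: setL_def)
  have yR: "y \<notin> setR" using yfl y0 by (simp add: setR_def)
  have Fval: "Fop h \<psi> (real n / real N) = complex_of_real (sqrt 2) * (G N m setE y + G N m setO (y - 1/2))"
  proof -
    have "real n / real N / 2 = y" by (simp add: y_def)
    then show ?thesis using yL yR
      by (simp add: Fop_def Let_def Sop_def posproj_def Xop_def Yop_def mE mO)
  qed
  have ip: "ipP N (Phi N (int n)) (Fop h \<psi>) = of_nat N * complex_of_real (1 / sqrt (real N)) * Fop h \<psi> (real n / real N)"
  proof -
    have "(\<Sum>j<N. cnj (Phi N (int n) (real j / real N)) * Fop h \<psi> (real j / real N))
        = (\<Sum>j<N. if j = n then complex_of_real (1 / sqrt (real N)) * Fop h \<psi> (real j / real N) else 0)"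
      by (intro sum.cong refl) (simp add: Phi_at[OF N n])
    also have "\<dots> = complex_of_real (1 / sqrt (real N)) * Fop h \<psi> (real n / real N)" using n by simp
    finally show ?thesis by (simp add: ipP_def)
  qed
  define \<alpha> where "\<alpha> = real n / real (2*N) - real m / real N"
  define a where "a w = cis (2*pi*\<alpha>*real w)" for w :: nat
  define b where "b w = cis (2*pi*(y - 1/2 - real m / real N)*real w)" for w :: nat
  define c0 where "c0 = 1 / (2 * real N * sqrt (real N))"
  have GE: "G N m setE y = complex_of_real c0 * (\<Sum>t<K. a (2*t) + a (2*t+1))"
  proof -
    have c: "\<exists>j::int. y = of_int j / real (2*N)" using y_def by (intro exI[of _ "int n"]) simp
    have "(\<Sum>v<2*N. (if real v / real N \<in> setE then 1 else 0) * cis (2*pi*(y - real m / real N)*real v))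
        = (\<Sum>v<N. (if real v / real N \<in> setE then 1 else 0) * cis (2*pi*(y - real m / real N)*real v))
          + (\<Sum>w<N. (if real (N+w) / real N \<in> setE then 1 else 0) * cis (2*pi*(y - real m / real N)*real (N+w)))"
      by (rule sum_two_blocks)
    also have "\<dots> = (\<Sum>v<N. a v)"
    proof -
      have "(\<Sum>v<N. (if real v / real N \<in> setE then 1 else 0) * cis (2*pi*(y - real m / real N)*real v)) = (\<Sum>v<N. a v)"
      proof (rule sum.cong[OF refl])
        fix v assume "v \<in> {..<N}"
        then have "\<lfloor>real v / real N\<rfloor> = 0" using N by (simp add: floor_eq_iff)
        then show "(if real v / real N \<in> setE then 1 else 0) * cis (2*pi*(y - real m / real N)*real v) = a v"
          by (simp add: setE_def a_def \<alpha>_def y_def)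
      qed
      moreover have "(\<Sum>w<N. (if real (N+w) / real N \<in> setE then 1 else 0) * cis (2*pi*(y - real m / real N)*real (N+w))) = 0"
      proof (rule sum.neutral, rule ballI)
        fix w assume "w \<in> {..<N}"
        then have "\<lfloor>real (N+w) / real N\<rfloor> = 1" using N by (simp add: floor_eq_iff field_simps)
        then show "(if real (N+w) / real N \<in> setE then 1 else 0) * cis (2*pi*(y - real m / real N)*real (N+w)) = 0"
          by (simp add: setE_def)
      qed
      ultimately show ?thesis by simp
    qed
    also have "\<dots> = (\<Sum>t<K. a (2*t) + a (2*t+1))" unfolding NK by (rule sum_pairs)
    finally show ?thesis unfolding G_def c0_def using c by simp
  qed
  have GO: "G N m setO (y - 1/2) = complex_of_real c0 * (\<Sum>t<K. b (N+2*t) + b (N+2*t+1))"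
  proof -
    have c: "\<exists>j::int. y - 1/2 = of_int j / real (2*N)" using y_def N by (intro exI[of _ "int n - int N"]) (simp add: field_simps)
    have "(\<Sum>v<2*N. (if real v / real N \<in> setO then 1 else 0) * cis (2*pi*(y - 1/2 - real m / real N)*real v))
        = (\<Sum>v<N. (if real v / real N \<in> setO then 1 else 0) * cis (2*pi*(y - 1/2 - real m / real N)*real v))
          + (\<Sum>w<N. (if real (N+w) / real N \<in> setO then 1 else 0) * cis (2*pi*(y - 1/2 - real m / real N)*real (N+w)))"
      by (rule sum_two_blocks)
    also have "\<dots> = (\<Sum>w<N. b (N+w))"
    proof -
      have "(\<Sum>w<N. (if real (N+w) / real N \<in> setO then 1 else 0) * cis (2*pi*(y - 1/2 - real m / real N)*real (N+w))) = (\<Sum>w<N. b (N+w))"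
      proof (rule sum.cong[OF refl])
        fix w assume "w \<in> {..<N}"
        then have "\<lfloor>real (N+w) / real N\<rfloor> = 1" using N by (simp add: floor_eq_iff field_simps)
        then show "(if real (N+w) / real N \<in> setO then 1 else 0) * cis (2*pi*(y - 1/2 - real m / real N)*real (N+w)) = b (N+w)"
          by (simp add: setO_def b_def)
      qed
      moreover have "(\<Sum>v<N. (if real v / real N \<in> setO then 1 else 0) * cis (2*pi*(y - 1/2 - real m / real N)*real v)) = 0"
      proof (rule sum.neutral, rule ballI)
        fix v assume "v \<in> {..<N}"
        then have "\<lfloor>real v / real N\<rfloor> = 0" using N by (simp add: floor_eq_iff)
        then show "(if real v / real N \<in> setO then 1 else 0) * cis (2*pi*(y - 1/2 - real m / real N)*real v) = 0"
          by (simp add: setO_def)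
      qed
      ultimately show ?thesis by simp
    qed
    also have "\<dots> = (\<Sum>t<K. b (N+2*t) + b (N+2*t+1))" unfolding NK using sum_pairs[of "\<lambda>w. b (K*2+w)" K] by (simp add: add.assoc)
    finally show ?thesis unfolding G_def c0_def using c by simp
  qed
  have bw: "b (N+w) = (-1) ^ (n+w) * a w" for w
  proof -
    have "b (N+w) = cis (2*pi*\<alpha>*real w + pi * real (n+w))"
      unfolding b_def
      by (rule cis_eqI[where k="- (int w + int K + int m)"]) (use K0 in \<open>simp add: y_def \<alpha>_def NK field_simps\<close>)
    also have "\<dots> = a w * cis (pi * real (n+w))" by (simp only: a_def cis_mult)
    also have "\<dots> = a w * (-1) ^ (n+w)" by (simp only: cis_pi_nat)
    finally show ?thesis by simp
  qed
  define \<epsilon> where "\<epsilon> = (if even n then 0 else 1::nat)"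
  have pair: "a (2*t) + a (2*t+1) + (b (N+2*t) + b (N+2*t+1)) = 2 * a (2*t + \<epsilon>)" for t
  proof -
    have b1: "b (N+2*t) = (-1)^(n+2*t) * a (2*t)" by (rule bw)
    have b2: "b (N+2*t+1) = (-1)^(n+(2*t+1)) * a (2*t+1)" by (metis add.assoc bw)
    show ?thesis unfolding b1 b2 \<epsilon>_def by (cases "even n") simp_all
  qed
  have "ipP N (Phi N (int n)) (Fop h \<psi>)
      = of_nat N * complex_of_real (1 / sqrt (real N)) * (complex_of_real (sqrt 2) * (complex_of_real c0 *
         (\<Sum>t<K. a (2*t) + a (2*t+1) + (b (N+2*t) + b (N+2*t+1)))))"
    unfolding ip Fval GE GO by (simp add: sum.distrib distrib_left)
  also have "\<dots> = of_nat N * complex_of_real (1 / sqrt (real N)) * (complex_of_real (sqrt 2) * (complex_of_real c0 *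
         (2 * (\<Sum>t<K. a (2*t + \<epsilon>)))))"
    unfolding pair by (simp add: sum_distrib_left)
  also have "\<dots> = complex_of_real (real N * (1 / sqrt (real N)) * sqrt 2 * c0 * 2) * (\<Sum>t<K. a (2*t + \<epsilon>))"
    by (simp add: mult_ac)
  also have "real N * (1 / sqrt (real N)) * sqrt 2 * c0 * 2 = sqrt 2 / real N"
    using N by (simp add: c0_def field_simps)
  finally show ?thesis unfolding h_def \<psi>_def K_def a_def \<alpha>_def \<epsilon>_def .
qed

lemma exp_i_real: "z = \<i> * complex_of_real t \<Longrightarrow> exp z = cis t"
  by (simp add: cis_conv_exp)

lemma FinvN_cis: "FinvN N n a = complex_of_real (1 / sqrt (real N)) * cis (2*pi*real n*real a/real N)"
proof -
  have "exp (complex_of_real (2 * pi) * \<i> * complex_of_nat n * complex_of_nat a / complex_of_nat N)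
      = cis (2*pi*real n*real a/real N)" by (rule exp_i_real) simp
  then show ?thesis unfolding FinvN_def by (simp add: divide_inverse mult.commute)
qed

lemma Fhalf_cis: "Fhalf N j k = complex_of_real (1 / sqrt (real (N div 2))) * cis (- 2*pi*real j*real k/real (N div 2))"
proof -
  have "exp (complex_of_real (- 2 * pi) * \<i> * complex_of_nat j * complex_of_nat k / complex_of_nat (N div 2))
      = cis (- 2*pi*real j*real k/real (N div 2))" by (rule exp_i_real) simp
  then show ?thesis unfolding Fhalf_def by (simp add: divide_inverse mult.commute)
qed

lemma phase1_cis: "exp (\<i> * complex_of_real pi * (complex_of_nat n - 2 * complex_of_nat m) / complex_of_nat N)
   = cis (pi * (real n - 2 * real m) / real N)"
  by (rule exp_i_real) simp

lemma phase2_cis: "exp (\<i> * complex_of_real pi * (complex_of_nat n - (2 * complex_of_nat m - complex_of_nat N)) / complex_of_nat N)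
   = cis (pi * (real n - (2 * real m - real N)) / real N)"
  by (rule exp_i_real) simp

lemma cis_prod2: "complex_of_real r1 * cis t1 * (complex_of_real r2 * cis t2) = complex_of_real (r1*r2) * cis (t1+t2)"
  by (simp add: cis_mult[symmetric] mult_ac)

lemma cis_prod3: "complex_of_real r1 * cis t1 * (cis t3 * (complex_of_real r2 * cis t2)) = complex_of_real (r1*r2) * cis (t1+t3+t2)"
  by (simp add: cis_mult[symmetric] mult_ac)

lemma RHS_eval:
  assumes N: "N > 0" and ev: "even N" and n: "n < N" and m: "m < N"
  shows "(\<Sum>a<N. FinvN N n a * Mmat N n a m)
       = complex_of_real (sqrt 2 / real N) *
         (\<Sum>t<N div 2. cis (2*pi*(real n / real (2*N) - real m / real N) * real (2*t + (if even n then 0 else 1))))"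
proof -
  define K where "K = N div 2"
  have NK: "N = 2*K" using ev by (simp add: K_def)
  have K0: "K > 0" using N NK by simp
  have rN: "real N = 2 * real K" using NK by simp
  have cst: "1 / sqrt (real N) * (1 / sqrt (real K)) = sqrt 2 / real N"
  proof -
    have "sqrt (real N) = sqrt 2 * sqrt (real K)" using rN by (simp add: real_sqrt_mult)
    moreover have "sqrt (real K) * sqrt (real K) = real K" by simp
    ultimately show ?thesis using K0 rN by (simp add: field_simps)
  qed
  define \<epsilon> where "\<epsilon> = (if even n then 0 else 1::nat)"
  define \<alpha> where "\<alpha> = real n / real (2*N) - real m / real N"
  define f where "f a = FinvN N n a * Mmat N n a m" for a
  have split: "(\<Sum>a<N. f a) = (\<Sum>a<K. f a) + (\<Sum>w<K. f (K + w))" unfolding NK by (rule sum_two_blocks)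
  show ?thesis
  proof (cases "m < K")
    case True
    have z: "(\<Sum>w<K. f (K + w)) = 0" using True by (intro sum.neutral) (simp add: f_def Mmat_def K_def[symmetric])
    have t: "f a = complex_of_real (sqrt 2 / real N) * cis (2*pi*\<alpha>*real (2*a + \<epsilon>))" if a: "a < K" for a
    proof (cases "even n")
      case True
      have "f a = complex_of_real (1 / sqrt (real N)) * cis (2*pi*real n*real a/real N) *
          (complex_of_real (1 / sqrt (real K)) * cis (- 2*pi*real a*real m/real K))"
        using a \<open>m < K\<close> True by (simp add: f_def Mmat_def K_def[symmetric] FinvN_cis Fhalf_cis)
      also have "\<dots> = complex_of_real (sqrt 2 / real N) * cis (2*pi*real n*real a/real N + (- 2*pi*real a*real m/real K))"
        by (simp only: cis_prod2 cst)
      also have "cis (2*pi*real n*real a/real N + (- 2*pi*real a*real m/real K)) = cis (2*pi*\<alpha>*real (2*a + \<epsilon>))"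
        using True K0 by (intro arg_cong[where f=cis]) (simp add: \<alpha>_def \<epsilon>_def rN field_simps)
      finally show ?thesis .
    next
      case False
      have "f a = complex_of_real (1 / sqrt (real N)) * cis (2*pi*real n*real a/real N) *
          (cis (pi * (real n - 2 * real m) / real N) * (complex_of_real (1 / sqrt (real K)) * cis (- 2*pi*real a*real m/real K)))"
        using a \<open>m < K\<close> False by (simp add: f_def Mmat_def K_def[symmetric] FinvN_cis Fhalf_cis phase1_cis)
      also have "\<dots> = complex_of_real (sqrt 2 / real N) * cis (2*pi*real n*real a/real N + pi * (real n - 2 * real m) / real N + (- 2*pi*real a*real m/real K))"
        by (simp only: cis_prod3 cst)
      also have "cis (2*pi*real n*real a/real N + pi * (real n - 2 * real m) / real N + (- 2*pi*real a*real m/real K)) = cis (2*pi*\<alpha>*real (2*a + \<epsilon>))"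
        using False K0 by (intro arg_cong[where f=cis]) (simp add: \<alpha>_def \<epsilon>_def rN field_simps)
      finally show ?thesis .
    qed
    have "(\<Sum>a<N. f a) = (\<Sum>a<K. complex_of_real (sqrt 2 / real N) * cis (2*pi*\<alpha>*real (2*a + \<epsilon>)))"
      unfolding split z using t by simp
    then show ?thesis by (simp add: f_def sum_distrib_left \<alpha>_def \<epsilon>_def K_def)
  next
    case False
    define m' where "m' = m - K"
    have mm: "m = K + m'" using False by (simp add: m'_def)
    have rm: "real m = real K + real m'" using mm by simp
    have z: "(\<Sum>a<K. f a) = 0" using False by (intro sum.neutral) (simp add: f_def Mmat_def K_def[symmetric])
    have t: "f (K + a) = complex_of_real (sqrt 2 / real N) * cis (2*pi*\<alpha>*real (2*a + \<epsilon>))" if a: "a < K" for a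
    proof (cases "even n")
      case True
      then obtain l where l: "n = 2*l" by blast
      have "f (K+a) = complex_of_real (1 / sqrt (real N)) * cis (2*pi*real n*real (K+a)/real N) *
          (complex_of_real (1 / sqrt (real K)) * cis (- 2*pi*real a*real m'/real K))"
        using a False True by (simp add: f_def Mmat_def K_def[symmetric] FinvN_cis Fhalf_cis m'_def)
      also have "\<dots> = complex_of_real (sqrt 2 / real N) * cis (2*pi*real n*real (K+a)/real N + (- 2*pi*real a*real m'/real K))"
        by (simp only: cis_prod2 cst)
      also have "cis (2*pi*real n*real (K+a)/real N + (- 2*pi*real a*real m'/real K)) = cis (2*pi*\<alpha>*real (2*a + \<epsilon>))"
        by (rule cis_eqI[where k="int l + int a"]) (use True K0 in \<open>simp add: \<alpha>_def \<epsilon>_def rN rm l field_simps\<close>)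
      finally show ?thesis .
    next
      case False
      then obtain l where l: "n = 2*l+1" using oddE by blast
      have "f (K+a) = complex_of_real (1 / sqrt (real N)) * cis (2*pi*real n*real (K+a)/real N) *
          (cis (pi * (real n - (2 * real m - real N)) / real N) * (complex_of_real (1 / sqrt (real K)) * cis (- 2*pi*real a*real m'/real K)))"
        using a \<open>\<not> m < K\<close> False by (simp add: f_def Mmat_def K_def[symmetric] FinvN_cis Fhalf_cis phase2_cis m'_def)
      also have "\<dots> = complex_of_real (sqrt 2 / real N) * cis (2*pi*real n*real (K+a)/real N + pi * (real n - (2 * real m - real N)) / real N + (- 2*pi*real a*real m'/real K))"
        by (simp only: cis_prod3 cst)
      also have "cis (2*pi*real n*real (K+a)/real N + pi * (real n - (2 * real m - real N)) / real N + (- 2*pi*real a*real m'/real K)) = cis (2*pi*\<alpha>*real (2*a + \<epsilon>))"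
        by (rule cis_eqI[where k="int l + 1 + int a"]) (use False K0 in \<open>simp add: \<alpha>_def \<epsilon>_def rN rm l field_simps\<close>)
      finally show ?thesis .
    qed
    have "(\<Sum>a<N. f a) = (\<Sum>a<K. complex_of_real (sqrt 2 / real N) * cis (2*pi*\<alpha>*real (2*a + \<epsilon>)))"
      unfolding split z using t by simp
    then show ?thesis by (simp add: f_def sum_distrib_left \<alpha>_def \<epsilon>_def K_def)
  qed
qed

theorem mainTheorem6:
  fixes N n m :: nat
  assumes "N > 0" and "even N" and "n < N" and "m < N"
  shows "ipP N (Phi N (int n)) (Fop (1 / (2 * pi * real N)) (Phi N (int m)))
         = (\<Sum>a<N. FinvN N n a * Mmat N n a m)"
  unfolding LHS_eval[OF assms] RHS_eval[OF assms] ..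

end
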